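(* Suppose a checkpoint $C$ of epoch $e$ is finalized on chain $c$, and a checkpoint $C'$ of epoch $e'>e$ is justified on chain $c'$. Then $c$ and $c'$ have a common prefix up to epoch $e$, i.e. the block of $C$ is an ancestor of (or equal to) the blocks of $c'$ at epochs $\ge e$.
   Context: System: $n$ validators, each with equal stake, of which $f<n/3$ are Byzantine; the validator set is fixed between finalized checkpoints. Blocks form a tree rooted at the genesis block, and a chain is a path from the genesis block. A checkpoint is a pair $(b,e)$, where $b$ is the block of the first slot of epoch $e$ on the chain. A checkpoint vote is a signed pair, source $(a,e_a)$ and target $(b,e_b)$, with $e_a<e_b$. A supermajority link $(a,e_a)\to(b,e_b)$ exists when more than $2/3$ of the validators cast that checkpoint vote. A checkpoint is justified if it is the target of a supermajority link; the genesis checkpoint is justified. A checkpoint $(a,e_a)$ is finalized if: - it is justified; - there is a supermajority link $(a,e_a)\to(b,e_b)$ with $e_b-e_a\le 2$; - if $e_b-e_a=2$, the checkpoint at epoch $e_a+1$ on that chain is justified. Honest validators follow these rules: - each casts at most one checkpoint vote per epoch; - the source is the justified checkpoint with the highest epoch in its view; - the target is the current epoch's checkpoint on the candidate chain, selected by a fork choice rule that only follows chains extending the block of that highest justified checkpoint. *)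

theory Defs
  imports Main
begin

definition anc :: "('b \<Rightarrow> 'b) \<Rightarrow> 'b \<Rightarrow> 'b \<Rightarrow> bool" where
  "anc par x y \<longleftrightarrow> (\<exists>k. (par ^^ k) y = x)"

definition block_tree :: "('b \<Rightarrow> 'b) \<Rightarrow> 'b \<Rightarrow> ('b \<Rightarrow> nat) \<Rightarrow> bool" where
  "block_tree par g slot \<longleftrightarrow>
     par g = g \<and> slot g = 0 \<and> (\<forall>b. b \<noteq> g \<longrightarrow> slot (par b) < slot b) \<and> (\<forall>b. anc par g b)"

(* A chain is the path from genesis to a head block h.  The checkpoint block of
   epoch e on chain h is the block of the first slot of epoch e (slot e*SPE), i.e.
   the latest ancestor of h whose slot is <= e*SPE. *)
definition cp :: "('b \<Rightarrow> 'b) \<Rightarrow> ('b \<Rightarrow> nat) \<Rightarrow> nat \<Rightarrow> 'b \<Rightarrow> nat \<Rightarrow> 'b" where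
  "cp par slot SPE h e = (par ^^ (LEAST k. slot ((par ^^ k) h) \<le> e * SPE)) h"

type_synonym 'b checkpoint = "'b \<times> nat"
type_synonym ('v, 'b) vote = "'v \<times> 'b checkpoint \<times> 'b checkpoint"  (* validator, source, target *)

definition is_checkpoint :: "('b \<Rightarrow> 'b) \<Rightarrow> ('b \<Rightarrow> nat) \<Rightarrow> nat \<Rightarrow> 'b checkpoint \<Rightarrow> bool" where
  "is_checkpoint par slot SPE C \<longleftrightarrow> (\<exists>h. cp par slot SPE h (snd C) = fst C)"

definition smlink :: "'v set \<Rightarrow> ('v, 'b) vote set \<Rightarrow> 'b checkpoint \<Rightarrow> 'b checkpoint \<Rightarrow> bool" where
  "smlink V W s t \<longleftrightarrow> 3 * card {v \<in> V. (v, s, t) \<in> W} > 2 * card V"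

definition justified :: "'v set \<Rightarrow> 'b \<Rightarrow> ('v, 'b) vote set \<Rightarrow> 'b checkpoint \<Rightarrow> bool" where
  "justified V g W C \<longleftrightarrow> C = (g, 0) \<or> (\<exists>s. smlink V W s C)"

definition finalized ::
  "('b \<Rightarrow> 'b) \<Rightarrow> ('b \<Rightarrow> nat) \<Rightarrow> nat \<Rightarrow> 'v set \<Rightarrow> 'b \<Rightarrow> ('v, 'b) vote set \<Rightarrow> 'b checkpoint \<Rightarrow> bool" where
  "finalized par slot SPE V g W C \<longleftrightarrow>
     justified V g W C \<and>
     (\<exists>b eb. smlink V W C (b, eb) \<and> eb - snd C \<le> 2 \<and>
        (eb - snd C = 2 \<longrightarrow> justified V g W (cp par slot SPE b (snd C + 1), snd C + 1)))"

(* Honest behaviour of validator v; view e = votes seen by v when voting in epoch e. *)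
definition honest ::
  "('b \<Rightarrow> 'b) \<Rightarrow> ('b \<Rightarrow> nat) \<Rightarrow> nat \<Rightarrow> 'v set \<Rightarrow> 'b \<Rightarrow> ('v, 'b) vote set
   \<Rightarrow> (nat \<Rightarrow> ('v, 'b) vote set) \<Rightarrow> 'v \<Rightarrow> bool" where
  "honest par slot SPE V g W view v \<longleftrightarrow>
     (\<forall>e. view e \<subseteq> W) \<and> (\<forall>e e'. e \<le> e' \<longrightarrow> view e \<subseteq> view e') \<and>
     (\<forall>s t s' t'. (v, s, t) \<in> W \<longrightarrow> (v, s', t') \<in> W \<longrightarrow> snd t = snd t' \<longrightarrow> s = s' \<and> t = t') \<and>
     (\<forall>a ea b eb. (v, (a, ea), (b, eb)) \<in> W \<longrightarrow>
        justified V g (view eb) (a, ea) \<and>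
        (\<forall>a' ea'. justified V g (view eb) (a', ea') \<longrightarrow> ea' \<le> ea) \<and>
        (\<exists>h. anc par a h \<and> b = cp par slot SPE h eb))"

end

theory Submission
  imports Defs
begin

lemma anc_refl: "anc par x x" unfolding anc_def by (metis funpow_0)

lemma anc_trans: assumes "anc par x y" "anc par y z" shows "anc par x z"
proof -
  obtain i where i: "(par ^^ i) z = y" using assms(2) unfolding anc_def by blast
  obtain j where j: "(par ^^ j) y = x" using assms(1) unfolding anc_def by blast
  have "(par ^^ (j + i)) z = x" using i j by (simp add: funpow_add)
  thus ?thesis unfolding anc_def by blast
qed

lemma honestD:
  assumes "honest par slot SPE V g W view v"
  shows "\<And>e. view e \<subseteq> W" "\<And>e e'. e \<le> e' \<Longrightarrow> view e \<subseteq> view e'"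
    "\<And>s t s' t'. (v, s, t) \<in> W \<Longrightarrow> (v, s', t') \<in> W \<Longrightarrow> snd t = snd t' \<Longrightarrow> s = s' \<and> t = t'"
    "\<And>a ea b eb. (v, (a, ea), (b, eb)) \<in> W \<Longrightarrow> justified V g (view eb) (a, ea)"
    "\<And>a ea b eb a' ea'. (v, (a, ea), (b, eb)) \<in> W \<Longrightarrow> justified V g (view eb) (a', ea') \<Longrightarrow> ea' \<le> ea"
    "\<And>a ea b eb. (v, (a, ea), (b, eb)) \<in> W \<Longrightarrow> \<exists>h. anc par a h \<and> b = cp par slot SPE h eb"
proof -
  note H = assms[unfolded honest_def]
  note H1 = H[THEN conjunct1] and H2 = H[THEN conjunct2, THEN conjunct1]
    and H3 = H[THEN conjunct2, THEN conjunct2, THEN conjunct1]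
    and H4 = H[THEN conjunct2, THEN conjunct2, THEN conjunct2]
  show "\<And>e. view e \<subseteq> W" using H1 by (rule spec)
  show "\<And>e e'. e \<le> e' \<Longrightarrow> view e \<subseteq> view e'" using H2 by (elim allE impE)
  show "\<And>s t s' t'. (v, s, t) \<in> W \<Longrightarrow> (v, s', t') \<in> W \<Longrightarrow> snd t = snd t' \<Longrightarrow> s = s' \<and> t = t'"
    using H3 by (elim allE impE)
  fix a ea b eb assume m: "(v, (a, ea), (b, eb)) \<in> W"
  have X: "justified V g (view eb) (a, ea) \<and>
        (\<forall>a' ea'. justified V g (view eb) (a', ea') \<longrightarrow> ea' \<le> ea) \<and>
        (\<exists>h. anc par a h \<and> b = cp par slot SPE h eb)" using H4 m by (elim allE impE)
  show "justified V g (view eb) (a, ea)" using X by (rule conjunct1)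
  show "\<exists>h. anc par a h \<and> b = cp par slot SPE h eb" using X by (elim conjE)
  fix a' ea' assume "justified V g (view eb) (a', ea')"
  then show "ea' \<le> ea" using X by (elim conjE allE impE)
qed

lemma smlink_mono: assumes "finite V" "W1 \<subseteq> W2" "smlink V W1 s t" shows "smlink V W2 s t"
proof -
  have "card {v \<in> V. (v, s, t) \<in> W1} \<le> card {v \<in> V. (v, s, t) \<in> W2}"
    using assms by (intro card_mono) auto
  thus ?thesis using assms(3) unfolding smlink_def by linarith
qed

lemma justified_mono: assumes "finite V" "W1 \<subseteq> W2" "justified V g W1 C" shows "justified V g W2 C"
  using assms smlink_mono unfolding justified_def by blast

context
  fixes par :: "'b \<Rightarrow> 'b" and g :: 'b and slot :: "'b \<Rightarrow> nat" and SPE :: nat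
    and V Byz :: "'v set" and W :: "('v, 'b) vote set" and view :: "'v \<Rightarrow> nat \<Rightarrow> ('v, 'b) vote set"
  assumes bt: "block_tree par g slot"
    and fin: "finite V" and byz: "Byz \<subseteq> V" and crd: "3 * card Byz < card V"
    and wf: "\<forall>(v, s, t) \<in> W. is_checkpoint par slot SPE s \<and> is_checkpoint par slot SPE t \<and> snd s < snd t"
    and hon: "\<forall>v \<in> V - Byz. honest par slot SPE V g W (view v) v"
begin

lemma cp_ex: "\<exists>k. slot ((par ^^ k) h) \<le> E * SPE"
proof -
  obtain k where "(par ^^ k) h = g" using bt unfolding block_tree_def anc_def by blast
  moreover have "slot g = 0" using bt unfolding block_tree_def by blast
  ultimately show ?thesis by (metis le0)
qed

lemma cp_props: "anc par (cp par slot SPE h E) h \<and> slot (cp par slot SPE h E) \<le> E * SPE"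
  using LeastI_ex[OF cp_ex[of h E]] unfolding cp_def anc_def by blast

lemma cp_anc: assumes "anc par x h" "slot x \<le> E * SPE" shows "anc par x (cp par slot SPE h E)"
proof -
  obtain j where j: "(par ^^ j) h = x" using assms(1) unfolding anc_def by blast
  define L where "L = (LEAST k. slot ((par ^^ k) h) \<le> E * SPE)"
  have "L \<le> j" unfolding L_def using j assms(2) by (intro Least_le) simp
  hence "j = (j - L) + L" by simp
  hence "x = (par ^^ (j - L)) ((par ^^ L) h)" using j by (metis funpow_add comp_apply)
  thus ?thesis unfolding cp_def L_def[symmetric] anc_def by blast
qed

lemma quorum: assumes "smlink V W s t" "smlink V W s' t'"
  shows "\<exists>v \<in> V - Byz. (v, s, t) \<in> W \<and> (v, s', t') \<in> W"
proof (rule ccontr)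
  assume na: "\<not> ?thesis"
  define A where "A = {v \<in> V. (v, s, t) \<in> W}"
  define B where "B = {v \<in> V. (v, s', t') \<in> W}"
  have fA: "finite A" "finite B" using fin unfolding A_def B_def by auto
  have "A \<inter> B \<subseteq> Byz" using na unfolding A_def B_def by auto
  hence c1: "card (A \<inter> B) \<le> card Byz" using fin byz by (meson card_mono finite_subset)
  have "card (A \<union> B) \<le> card V" using fin unfolding A_def B_def by (intro card_mono) auto
  moreover have "card A + card B = card (A \<union> B) + card (A \<inter> B)" using fA card_Un_Int by blast
  moreover have "3 * card A > 2 * card V" "3 * card B > 2 * card V"
    using assms unfolding smlink_def A_def B_def by auto
  ultimately show False using c1 crd by linarith
qed

lemma same_epoch: assumes "smlink V W s (x, E)" "smlink V W s' (y, E)" shows "x = y"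
proof -
  obtain v where v: "v \<in> V - Byz" "(v, s, (x, E)) \<in> W" "(v, s', (y, E)) \<in> W"
    using quorum[OF assms] by blast
  have "honest par slot SPE V g W (view v) v" using hon v(1) by blast
  from honestD(3)[OF this v(2,3)] show ?thesis by simp
qed

lemma main:
  assumes fz: "finalized par slot SPE V g W (a, e)" and sa: "slot a \<le> e * SPE" and e0: "e > 0"
  shows "justified V g W (d, E) \<Longrightarrow> E > e \<Longrightarrow> anc par a d"
proof (induction E arbitrary: d rule: less_induct)
  case (less E d)
  obtain s es where sl: "smlink V W (s, es) (d, E)"
    using less.prems unfolding justified_def by auto
  have ja: "justified V g W (a, e)" using fz unfolding finalized_def by auto
  obtain b eb where bl: "smlink V W (a, e) (b, eb)" and le2: "eb - e \<le> 2"
    and c2: "eb - e = 2 \<longrightarrow> justified V g W (cp par slot SPE b (e + 1), e + 1)"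
    using fz unfolding finalized_def by auto
  obtain v where v: "v \<in> V - Byz" "(v, (s, es), (d, E)) \<in> W" "(v, (a, e), (b, eb)) \<in> W"
    using quorum[OF sl bl] by blast
  have hv: "honest par slot SPE V g W (view v) v" using hon v(1) by blast
  have "snd (s, es) < snd (d, E)" using wf v(2) by fast
  moreover have "snd (a, e) < snd (b, eb)" using wf v(3) by fast
  ultimately have ees: "es < E" "e < eb" by simp_all
  obtain h2 where h2: "anc par s h2" "d = cp par slot SPE h2 E"
    using honestD(6)[OF hv v(2)] by blast
  have js: "justified V g (view v E) (s, es)"
    and hi: "\<forall>a' ea'. justified V g (view v E) (a', ea') \<longrightarrow> ea' \<le> es"
    using honestD(4,5)[OF hv v(2)] by blast+
  have jab: "justified V g (view v eb) (a, e)" using honestD(4)[OF hv v(3)] .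
  obtain hb where hb: "anc par a hb" "b = cp par slot SPE hb eb"
    using honestD(6)[OF hv v(3)] by blast
  have slE: "\<And>E'. E' \<ge> e \<Longrightarrow> slot a \<le> E' * SPE"
    using sa by (meson le_trans mult_le_mono1)
  have "slot a \<le> eb * SPE" using slE ees(2) by simp
  hence ab: "anc par a b" using hb cp_anc by blast
  consider "E = eb" | "E < eb" | "E > eb" by linarith
  then show ?case
  proof cases
    case 1
    then have "d = b" using same_epoch[OF sl] bl by blast
    then show ?thesis using ab by simp
  next
    case 2
    hence E1: "E = e + 1" "eb - e = 2" using less.prems(2) le2 by auto
    then obtain s2 where "smlink V W s2 (cp par slot SPE b (e + 1), e + 1)"
      using c2 unfolding justified_def by auto
    hence "d = cp par slot SPE b (e + 1)" using same_epoch[OF sl] E1 by blast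
    moreover have "anc par a (cp par slot SPE b (e + 1))" using cp_anc[OF ab slE[of "e+1"]] by simp
    ultimately show ?thesis by simp
  next
    case 3
    have "view v eb \<subseteq> view v E" using honestD(2)[OF hv] 3 by simp
    hence "justified V g (view v E) (a, e)" using justified_mono[OF fin _ jab] by blast
    hence ees2: "e \<le> es" using hi by blast
    have jsW: "justified V g W (s, es)"
    proof -
      have "view v E \<subseteq> W" using honestD(1)[OF hv] by blast
      thus ?thesis using justified_mono[OF fin _ js] by blast
    qed
    have as: "anc par a s"
    proof (cases "es = e")
      case True
      obtain s3 where "smlink V W s3 (s, es)" using jsW e0 True unfolding justified_def by auto
      moreover obtain s4 where "smlink V W s4 (a, e)" using ja e0 unfolding justified_def by auto
      ultimately have "s = a" using same_epoch True by blast
      then show ?thesis by (simp add: anc_refl)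
    next
      case False
      then show ?thesis using less.IH[OF ees(1) jsW] ees2 by simp
    qed
    have "anc par a h2" using anc_trans[OF as h2(1)] .
    moreover have "slot a \<le> E * SPE" using slE less.prems(2) by simp
    ultimately show ?thesis using cp_anc h2(2) by blast
  qed
qed

end

theorem lemma2:
  fixes par :: "'b \<Rightarrow> 'b" and g :: 'b and slot :: "'b \<Rightarrow> nat" and SPE :: nat
    and V Byz :: "'v set" and W :: "('v, 'b) vote set" and view :: "'v \<Rightarrow> nat \<Rightarrow> ('v, 'b) vote set"
    and a d h h' :: 'b and e e' :: nat
  assumes "block_tree par g slot" and "SPE > 0"
    and "finite V" and "Byz \<subseteq> V" and "3 * card Byz < card V"
    and "\<forall>(v, s, t) \<in> W. is_checkpoint par slot SPE s \<and> is_checkpoint par slot SPE t \<and> snd s < snd t"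
    and "\<forall>v \<in> V - Byz. honest par slot SPE V g W (view v) v"
    and "cp par slot SPE h e = a" and "finalized par slot SPE V g W (a, e)"
    and "cp par slot SPE h' e' = d" and "e' > e" and "justified V g W (d, e')"
  shows "\<forall>k \<ge> e. anc par a (cp par slot SPE h' k)"
proof (intro allI impI)
  fix k assume ke: "k \<ge> e"
  note cpp = cp_props[OF assms(1,3,4,5,6,7)]
  note cpa = cp_anc[OF assms(1,3,4,5,6,7)]
  have "slot (cp par slot SPE h e) \<le> e * SPE" using cpp by blast
  hence sa: "slot a \<le> e * SPE" using assms(8) by simp
  have ad: "anc par a d"
  proof (cases "e = 0")
    case True
    hence "slot a = 0" using sa by simp
    have dec: "\<forall>b. b \<noteq> g \<longrightarrow> slot (par b) < slot b" and all: "\<forall>b. anc par g b"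
      using assms(1) unfolding block_tree_def by blast+
    have "a = g"
    proof (rule ccontr)
      assume "a \<noteq> g" with dec have "slot (par a) < slot a" by blast
      with \<open>slot a = 0\<close> show False by simp
    qed
    then show ?thesis using all by blast
  next
    case False
    hence "0 < e" by simp
    then show ?thesis
      using main[OF assms(1,3,4,5,6,7) assms(9) sa _ assms(12,11)] by blast
  qed
  have "anc par (cp par slot SPE h' e') h'" using cpp by blast
  hence "anc par d h'" using assms(10) by simp
  hence "anc par a h'" using anc_trans[OF ad] by blast
  moreover have "slot a \<le> k * SPE" using sa ke by (meson le_trans mult_le_mono1)
  ultimately show "anc par a (cp par slot SPE h' k)" using cpa by blast
qed

end
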